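(* Let $m=2^k$ with $k\ge 2$, $\omega=e^{2\pi i/m}$, $F_m=\frac{1}{\sqrt m}(\omega^{jk})_{j,k=0}^{m-1}$, and $\alpha\in\mathbb{C}$. For $j\ge 0$ let $B_j=\frac{1}{\sqrt{1+|\alpha|^{2j}}}\begin{pmatrix}1&\alpha^j\\ \overline{\alpha}^j&-1\end{pmatrix}$. Let $J$ be the $m\times m$ permutation matrix with $J\ket{i}=\ket{2i}$ and $J\ket{m-1-i}=\ket{2i+1}$ for $0\le i<m/2$ (basis $\ket{0},\dots,\ket{m-1}$). Define $A=J^\dagger\left(B_{m/4}\otimes B_{m/8}\otimes\cdots\otimes B_2\otimes B_1\otimes B_0\right)JF_m^\dagger$. Let $\ket{\Psi}=\frac{1}{\sqrt\kappa}(1,\alpha,\alpha^2,\dots,\alpha^{m/2-1},\alpha^{m/2-1},\dots,\alpha,1)^T\in\mathbb{C}^m$ with $\kappa=2m(1+|\alpha|^2+|\alpha|^4+\cdots+|\alpha|^{m-2})$, and write $\ket{\Psi}=(v_1,\dots,v_m)^T$. Then $A$ is unitary and its first row equals $(\sqrt m\,v_1,\dots,\sqrt m\,v_m)F_m^\dagger$.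
   Context: The Kronecker product $B_{m/4}\otimes\cdots\otimes B_1\otimes B_0$ has $k$ factors $B_{2^{k-2}},\dots,B_2,B_1,B_0$, the leftmost factor acting on the most significant binary digit of the index $0,\dots,m-1$. *)

theory Defs
  imports Complex_Main "Jordan_Normal_Form.Matrix"
begin

definition adj :: "complex mat \<Rightarrow> complex mat" where
  "adj A = mat (dim_col A) (dim_row A) (\<lambda>(i,j). cnj (A $$ (j,i)))"

definition unitary_mat :: "complex mat \<Rightarrow> bool" where
  "unitary_mat U \<longleftrightarrow> dim_row U = dim_col U \<and>
     adj U * U = 1\<^sub>m (dim_row U) \<and> U * adj U = 1\<^sub>m (dim_row U)"

text \<open>Kronecker product (standard: the left factor acts on the more significant index digit).\<close>
definition kron :: "complex mat \<Rightarrow> complex mat \<Rightarrow> complex mat" where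
  "kron A B = mat (dim_row A * dim_row B) (dim_col A * dim_col B)
     (\<lambda>(i,j). A $$ (i div dim_row B, j div dim_col B) * B $$ (i mod dim_row B, j mod dim_col B))"

definition kron_list :: "complex mat list \<Rightarrow> complex mat" where
  "kron_list Ms = foldr kron Ms (1\<^sub>m 1)"

definition Bmat :: "complex \<Rightarrow> nat \<Rightarrow> complex mat" where
  "Bmat \<alpha> j = complex_of_real (1 / sqrt (1 + cmod \<alpha> ^ (2*j))) \<cdot>\<^sub>m
     mat 2 2 (\<lambda>(r,c). if r = 0 \<and> c = 0 then 1 else if r = 0 \<and> c = 1 then \<alpha> ^ j
                      else if r = 1 \<and> c = 0 then cnj \<alpha> ^ j else -1)"

definition Bkron :: "complex \<Rightarrow> nat \<Rightarrow> complex mat" where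
  "Bkron \<alpha> k = kron_list (map (\<lambda>t. Bmat \<alpha> (2 ^ t)) (rev [0..<k-1]) @ [Bmat \<alpha> 0])"

definition fourier :: "nat \<Rightarrow> complex mat" where
  "fourier m = mat m m (\<lambda>(j,l). complex_of_real (1 / sqrt (real m)) *
      exp (2 * complex_of_real pi * \<i> / of_nat m) ^ (j * l))"

definition Jidx :: "nat \<Rightarrow> nat \<Rightarrow> nat" where
  "Jidx m c = (if c < m div 2 then 2 * c else 2 * (m - 1 - c) + 1)"

definition Jmat :: "nat \<Rightarrow> complex mat" where
  "Jmat m = mat m m (\<lambda>(r,c). if r = Jidx m c then 1 else 0)"

definition Amat :: "complex \<Rightarrow> nat \<Rightarrow> complex mat" where
  "Amat \<alpha> k = adj (Jmat (2^k)) * Bkron \<alpha> k * Jmat (2^k) * adj (fourier (2^k))"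

definition kappa :: "complex \<Rightarrow> nat \<Rightarrow> real" where
  "kappa \<alpha> m = 2 * real m * (\<Sum>t<m div 2. cmod \<alpha> ^ (2*t))"

definition Psi :: "complex \<Rightarrow> nat \<Rightarrow> complex vec" where
  "Psi \<alpha> m = vec m (\<lambda>l. complex_of_real (1 / sqrt (kappa \<alpha> m)) *
      (if l < m div 2 then \<alpha> ^ l else \<alpha> ^ (m - 1 - l)))"

end

theory Submission
  imports Defs "Jordan_Normal_Form.Determinant"
begin


lemma adj_carrier[simp]: "dim_row (adj A) = dim_col A" "dim_col (adj A) = dim_row A"
  by (auto simp: adj_def)

lemma adj_index[simp]: "i < dim_col A \<Longrightarrow> j < dim_row A \<Longrightarrow> adj A $$ (i,j) = cnj (A $$ (j,i))"
  by (auto simp: adj_def)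

lemma adj_mult: assumes "A \<in> carrier_mat n m" "B \<in> carrier_mat m p"
  shows "adj (A * B) = adj B * adj A"
  by (rule eq_matI, insert assms, auto simp: scalar_prod_def mult.commute intro!: sum.cong)

lemma adj_one[simp]: "adj (1\<^sub>m n) = 1\<^sub>m n"
  by (rule eq_matI, auto)

lemma unitaryI: assumes "U \<in> carrier_mat n n" "adj U * U = 1\<^sub>m n"
  shows "unitary_mat U"
proof -
  have "U * adj U = 1\<^sub>m n"
    by (rule mat_mult_left_right_inverse[OF _ _ assms(2)], insert assms(1), auto)
  thus ?thesis using assms unfolding unitary_mat_def by auto
qed

lemma unitary_mult: assumes "unitary_mat A" "unitary_mat B" "A \<in> carrier_mat n n" "B \<in> carrier_mat n n"
  shows "unitary_mat (A * B)"
proof (rule unitaryI[of _ n])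
  show "A * B \<in> carrier_mat n n" using assms by auto
  have aA: "adj A * A = 1\<^sub>m n" and bB: "adj B * B = 1\<^sub>m n" using assms unfolding unitary_mat_def by auto
  have c: "adj A \<in> carrier_mat n n" "adj B \<in> carrier_mat n n" using assms by auto
  have "adj (A * B) * (A * B) = adj B * adj A * (A * B)" using adj_mult assms by metis
  also have "\<dots> = adj B * (adj A * A) * B"
    using assms c by (simp add: assoc_mult_mat[of _ n n _ n _ n])
  also have "\<dots> = 1\<^sub>m n" using aA bB assms c by simp
  finally show "adj (A * B) * (A * B) = 1\<^sub>m n" .
qed

lemma sum_split_prod: "(\<Sum>r\<in>{0..<a*b}. f r) = (\<Sum>p\<in>{0..<a}. \<Sum>q\<in>{0..<b}. f (p*b+q::nat))"
proof (induction a)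
  case 0 then show ?case by simp
next
  case (Suc a)
  have "(\<Sum>r\<in>{0..<Suc a*b}. f r) = (\<Sum>r\<in>{0..<a*b}. f r) + (\<Sum>r\<in>{a*b..<a*b+b}. f r)"
    by (simp add: sum.atLeastLessThan_concat add.commute)
  also have "(\<Sum>r\<in>{a*b..<a*b+b}. f r) = (\<Sum>q\<in>{0..<b}. f (a*b+q))"
    using sum.shift_bounds_nat_ivl[of f 0 "a*b" b] by (simp add: add.commute)
  finally show ?case using Suc by simp
qed

lemma kron_dim[simp]: "dim_row (kron A B) = dim_row A * dim_row B" "dim_col (kron A B) = dim_col A * dim_col B"
  by (auto simp: kron_def)

lemma kron_index[simp]: "i < dim_row A * dim_row B \<Longrightarrow> j < dim_col A * dim_col B \<Longrightarrow>
   kron A B $$ (i,j) = A $$ (i div dim_row B, j div dim_col B) * B $$ (i mod dim_row B, j mod dim_col B)"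
  by (auto simp: kron_def)

lemma kron_mixed: assumes A: "A \<in> carrier_mat ra ca" and C: "C \<in> carrier_mat ca cc"
  and B: "B \<in> carrier_mat rb cb" and D: "D \<in> carrier_mat cb cd"
  and pos: "rb > 0" "cb > 0" "cd > 0"
  shows "kron A B * kron C D = kron (A * C) (B * D)"
proof (rule eq_matI)
  fix i j assume i: "i < dim_row (kron (A * C) (B * D))" and j: "j < dim_col (kron (A * C) (B * D))"
  have i': "i < ra * rb" and j': "j < cc * cd" using i j A B C D by auto
  have id: "i div rb < ra" "j div cd < cc" "i mod rb < rb" "j mod cd < cd"
    using i' j' pos by (auto simp: less_mult_imp_div_less)
  have "(kron A B * kron C D) $$ (i,j) = (\<Sum>r\<in>{0..<ca*cb}.
      (A $$ (i div rb, r div cb) * B $$ (i mod rb, r mod cb)) * (C $$ (r div cb, j div cd) * D $$ (r mod cb, j mod cd)))"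
    using i' j' A B C D by (auto simp: scalar_prod_def intro!: sum.cong)
  also have "\<dots> = (\<Sum>p\<in>{0..<ca}. \<Sum>q\<in>{0..<cb}.
      (A $$ (i div rb, p) * C $$ (p, j div cd)) * (B $$ (i mod rb, q) * D $$ (q, j mod cd)))"
    unfolding sum_split_prod using pos by (intro sum.cong refl, simp add: mult_ac)
  also have "\<dots> = (\<Sum>p\<in>{0..<ca}. A $$ (i div rb, p) * C $$ (p, j div cd)) * (\<Sum>q\<in>{0..<cb}. B $$ (i mod rb, q) * D $$ (q, j mod cd))"
    by (simp add: sum_product)
  also have "\<dots> = kron (A * C) (B * D) $$ (i,j)"
    using i' j' A B C D id by (auto simp: scalar_prod_def)
  finally show "(kron A B * kron C D) $$ (i,j) = kron (A * C) (B * D) $$ (i,j)" .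
qed (insert A B C D, auto)

lemma adj_kron: "adj (kron A B) = kron (adj A) (adj B)"
proof (rule eq_matI)
  fix i j assume "i < dim_row (kron (adj A) (adj B))" "j < dim_col (kron (adj A) (adj B))"
  then have i: "i < dim_col A * dim_col B" and j: "j < dim_row A * dim_row B" by auto
  then have "dim_col B > 0" "dim_row B > 0" by (auto intro: ccontr)
  then show "adj (kron A B) $$ (i,j) = kron (adj A) (adj B) $$ (i,j)"
    using i j by (auto simp: less_mult_imp_div_less)
qed auto

lemma kron_one: "n > 0 \<Longrightarrow> kron (1\<^sub>m a) (1\<^sub>m n) = 1\<^sub>m (a*n)"
proof (rule eq_matI)
  fix i j assume n: "n > 0" and "i < dim_row (1\<^sub>m (a*n)::complex mat)" "j < dim_col (1\<^sub>m (a*n)::complex mat)"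
  then have i: "i < a*n" and j: "j < a*n" by auto
  have "(i div n = j div n \<and> i mod n = j mod n) = (i = j)"
    by (metis div_mult_mod_eq)
  then show "kron (1\<^sub>m a) (1\<^sub>m n) $$ (i,j) = 1\<^sub>m (a*n) $$ (i,j)"
    using i j n by (auto simp: less_mult_imp_div_less)
qed auto

lemma unitary_kron: assumes "unitary_mat A" "unitary_mat B" "A \<in> carrier_mat a a" "B \<in> carrier_mat b b" "b > 0"
  shows "unitary_mat (kron A B)"
proof (rule unitaryI[of _ "a*b"])
  show "kron A B \<in> carrier_mat (a*b) (a*b)" using assms by auto
  have aA: "adj A * A = 1\<^sub>m a" and bB: "adj B * B = 1\<^sub>m b" using assms unfolding unitary_mat_def by auto
  show "adj (kron A B) * kron A B = 1\<^sub>m (a*b)"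
    unfolding adj_kron using assms
    by (subst kron_mixed[of _ a a _ a _ b b _ b], auto simp: aA bB kron_one)
qed




lemma w_cis: "exp (2 * complex_of_real pi * \<i> / of_nat m) = cis (2*pi/m)"
  by (simp add: cis_conv_exp field_simps)

lemma fourier_index: "j < m \<Longrightarrow> l < m \<Longrightarrow> fourier m $$ (j,l) = complex_of_real (1 / sqrt (real m)) * cis (2*pi/m) ^ (j*l)"
  by (simp add: fourier_def w_cis)

lemma fourier_carrier[simp]: "fourier m \<in> carrier_mat m m" "dim_row (fourier m) = m" "dim_col (fourier m) = m"
  by (auto simp: fourier_def)

lemma cis_ne_1: fixes m i j :: nat assumes m: "m > 0" and i: "i < m" and j: "j < m" and ij: "i \<noteq> j"
  shows "cis (2*pi/m * (real j - real i)) \<noteq> 1"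
proof
  assume "cis (2*pi/m * (real j - real i)) = 1"
  then have "Re (cis (2*pi/m * (real j - real i))) = Re 1" by simp
  then have "cos (2*pi/m * (real j - real i)) = 1" by simp
  then obtain n :: int where n: "2*pi/m * (real j - real i) = n * 2 * pi" by (auto simp: cos_one_2pi_int)
  define x where "x = (real j - real i)/m"
  have "(2*pi)*x = (2*pi)* n" using n unfolding x_def by (simp add: mult_ac)
  then have "x = n" by (metis mult_left_cancel pi_neq_zero mult_eq_0_iff zero_neq_numeral)
  then have "real j - real i = n * m" using m unfolding x_def by (simp add: divide_eq_eq)
  then have "real_of_int (int j - int i) = real_of_int (n * int m)" by simp
  then have "int j - int i = n * int m" by (simp only: of_int_eq_iff)
  moreover have "\<bar>int j - int i\<bar> < int m" using i j by auto
  ultimately have "\<bar>n\<bar> * int m < 1 * int m" by (simp add: abs_mult)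
  then have "\<bar>n\<bar> < 1" using m by (simp only: mult_less_cancel_right_pos of_nat_0_less_iff)
  then have "n = 0" by simp
  then show False using \<open>int j - int i = n * int m\<close> ij by simp
qed


lemma fourier_unitary: assumes m: "m > 0" shows "unitary_mat (fourier m)"
proof (rule unitaryI[of _ m])
  show "fourier m \<in> carrier_mat m m" by simp
  define s where "s = 1 / sqrt (real m)"
  define \<theta> where "\<theta> = 2*pi/m"
  show "adj (fourier m) * fourier m = 1\<^sub>m m"
  proof (rule eq_matI)
    fix i j assume "i < dim_row (1\<^sub>m m :: complex mat)" "j < dim_col (1\<^sub>m m :: complex mat)"
    then have i: "i < m" and j: "j < m" by auto
    let ?z = "cis (\<theta> * (real j - real i))"
    have "(adj (fourier m) * fourier m) $$ (i,j) = (\<Sum>l\<in>{0..<m}. cnj (fourier m $$ (l,i)) * fourier m $$ (l,j))"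
      using i j by (simp add: scalar_prod_def)
    also have "\<dots> = (\<Sum>l\<in>{0..<m}. complex_of_real (s^2) * ?z ^ l)"
    proof (intro sum.cong refl)
      fix l assume l: "l \<in> {0..<m}"
      have l': "l < m" using l by simp
      have "cnj (fourier m $$ (l,i)) * fourier m $$ (l,j) = complex_of_real (s*s) * (cnj (cis \<theta> ^ (l*i)) * cis \<theta> ^ (l*j))"
        unfolding fourier_index[OF l' i] fourier_index[OF l' j] s_def[symmetric] \<theta>_def[symmetric]
        by (simp add: mult_ac)
      also have "cnj (cis \<theta> ^ (l*i)) * cis \<theta> ^ (l*j) = cis (- (real (l*i) * \<theta>)) * cis (real (l*j) * \<theta>)"
        by (simp only: DeMoivre cis_cnj)
      also have "cis (- (real (l*i) * \<theta>)) * cis (real (l*j) * \<theta>) = ?z ^ l"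
        by (simp add: cis_mult DeMoivre algebra_simps)
      finally show "cnj (fourier m $$ (l,i)) * fourier m $$ (l,j) = complex_of_real (s^2) * ?z ^ l"
        by (simp add: power2_eq_square)
    qed
    also have "\<dots> = complex_of_real (s^2) * (\<Sum>l<m. ?z ^ l)"
      by (simp add: sum_distrib_left atLeast0LessThan)
    also have "\<dots> = 1\<^sub>m m $$ (i,j)"
    proof (cases "i = j")
      case True
      have "s^2 * real m = 1" using m by (simp add: s_def power_divide)
      moreover have "complex_of_real (s^2) * of_nat m = complex_of_real (s^2 * real m)" by simp
      ultimately have "complex_of_real (s^2) * of_nat m = 1" by simp
      then show ?thesis using i True by simp
    next
      case False
      have ne: "?z \<noteq> 1" using cis_ne_1[OF m i j False] by (simp add: \<theta>_def)
      have "real m * (\<theta> * (real j - real i)) = 2 * pi * of_int (int j - int i)"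
        using m unfolding \<theta>_def by simp
      then have "?z ^ m = cis (2 * pi * of_int (int j - int i))"
        by (simp only: DeMoivre)
      also have "\<dots> = 1" by (rule cis_multiple_2pi, simp)
      finally have "(\<Sum>l<m. ?z ^ l) = 0" using ne by (simp add: geometric_sum)
      then show ?thesis using i j False by simp
    qed
    finally show "(adj (fourier m) * fourier m) $$ (i,j) = 1\<^sub>m m $$ (i,j)" .
  qed auto
qed




lemma Bmat_carrier[simp]: "Bmat \<alpha> j \<in> carrier_mat 2 2" "dim_row (Bmat \<alpha> j) = 2" "dim_col (Bmat \<alpha> j) = 2"
  by (auto simp: Bmat_def)

lemma Bmat_index: "r < 2 \<Longrightarrow> q < 2 \<Longrightarrow> Bmat \<alpha> j $$ (r,q) = complex_of_real (1 / sqrt (1 + cmod \<alpha> ^ (2*j))) *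
   (if r = 0 \<and> q = 0 then 1 else if r = 0 \<and> q = 1 then \<alpha> ^ j else if r = 1 \<and> q = 0 then cnj \<alpha> ^ j else -1)"
  by (auto simp: Bmat_def)

lemma Bmat_unitary: "unitary_mat (Bmat \<alpha> j)"
proof (rule unitaryI[of _ 2])
  show "Bmat \<alpha> j \<in> carrier_mat 2 2" by simp
  define c where "c = 1 / sqrt (1 + cmod \<alpha> ^ (2*j))"
  define a where "a = \<alpha> ^ j"
  have ca: "cnj \<alpha> ^ j = cnj a" unfolding a_def by simp
  have n: "cmod \<alpha> ^ (2*j) = cmod a ^ 2" unfolding a_def by (simp add: norm_power power_mult[symmetric] mult.commute)
  have pos: "1 + cmod a ^ 2 > 0" by (simp add: add_pos_nonneg)
  have "c * c * (1 + cmod a ^ 2) = 1" unfolding c_def n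
    using pos by simp
  then have "complex_of_real (c * c * (1 + cmod a ^ 2)) = 1" by simp
  then have key: "complex_of_real c * complex_of_real c * (1 + a * cnj a) = 1"
    by (simp add: complex_norm_square[symmetric])
  have key2: "complex_of_real c * complex_of_real c * (1 + cnj a * a) = 1"
    using key by (simp add: mult.commute)
  have Bi: "\<And>r q. r < 2 \<Longrightarrow> q < 2 \<Longrightarrow> Bmat \<alpha> j $$ (r,q) = complex_of_real c *
   (if r = 0 \<and> q = 0 then 1 else if r = 0 \<and> q = 1 then a else if r = 1 \<and> q = 0 then cnj a else -1)"
    by (simp add: Bmat_index c_def a_def)
  have sum2: "\<And>f. (\<Sum>r\<in>{0..<2::nat}. f r) = f 0 + f 1" by (simp add: numeral_2_eq_2)
  show "adj (Bmat \<alpha> j) * Bmat \<alpha> j = 1\<^sub>m 2"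
  proof (rule eq_matI)
    fix p q assume "p < dim_row (1\<^sub>m 2 :: complex mat)" "q < dim_col (1\<^sub>m 2 :: complex mat)"
    then have p: "p = 0 \<or> p = 1" and q: "q = 0 \<or> q = 1" by auto
    show "(adj (Bmat \<alpha> j) * Bmat \<alpha> j) $$ (p,q) = 1\<^sub>m 2 $$ (p,q)"
      using p q key key2
      by (auto simp: scalar_prod_def sum2 Bi algebra_simps)
  qed auto
qed

definition Lk :: "complex \<Rightarrow> nat \<Rightarrow> complex mat" where
  "Lk \<alpha> n = kron_list (map (\<lambda>t. Bmat \<alpha> (2 ^ t)) (rev [0..<n]) @ [Bmat \<alpha> 0])"

lemma Lk_0: "Lk \<alpha> 0 = kron (Bmat \<alpha> 0) (1\<^sub>m 1)"
  by (simp add: Lk_def kron_list_def)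

lemma Lk_Suc: "Lk \<alpha> (Suc n) = kron (Bmat \<alpha> (2^n)) (Lk \<alpha> n)"
  by (simp add: Lk_def kron_list_def)

lemma Lk_carrier: "Lk \<alpha> n \<in> carrier_mat (2^Suc n) (2^Suc n)"
  by (induction n) (auto simp: Lk_0 Lk_Suc kron_def)

lemma unitary_one: "unitary_mat (1\<^sub>m n)"
  by (rule unitaryI[of _ n], auto)

lemma Lk_unitary: "unitary_mat (Lk \<alpha> n)"
proof (induction n)
  case 0
  show ?case unfolding Lk_0 by (rule unitary_kron[of _ _ 2 1], auto simp: Bmat_unitary unitary_one)
next
  case (Suc n)
  show ?case unfolding Lk_Suc
    by (rule unitary_kron[of _ _ 2 "2^Suc n"], insert Suc Lk_carrier[of \<alpha> n], auto simp: Bmat_unitary)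
qed

definition Cn :: "complex \<Rightarrow> nat \<Rightarrow> real" where
  "Cn \<alpha> n = 1 / sqrt (2 * (\<Prod>t<n. 1 + cmod \<alpha> ^ (2 * 2^t)))"

lemma Lk_row0: "j < 2^Suc n \<Longrightarrow> Lk \<alpha> n $$ (0,j) = complex_of_real (Cn \<alpha> n) * \<alpha> ^ (j div 2)"
proof (induction n arbitrary: j)
  case 0
  then have j: "j = 0 \<or> j = 1" by auto
  then show ?case unfolding Lk_0 using j by (auto simp: Bmat_index Cn_def)
next
  case (Suc n)
  define M where "M = (2::nat)^Suc n"
  have dimL: "dim_row (Lk \<alpha> n) = M" "dim_col (Lk \<alpha> n) = M" using Lk_carrier[of \<alpha> n] by (auto simp: M_def)
  have jM: "j < 2 * M" using Suc.prems by (simp add: M_def)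
  have M0: "M > 0" by (simp add: M_def)
  have b: "j div M < 2" using jM by (simp add: less_mult_imp_div_less mult.commute)
  have jm: "j mod M < 2^Suc n" using M0 by (simp add: M_def)
  have "Lk \<alpha> (Suc n) $$ (0,j) = Bmat \<alpha> (2^n) $$ (0, j div M) * Lk \<alpha> n $$ (0, j mod M)"
    unfolding Lk_Suc using jM M0 by (subst kron_index, auto simp: dimL)
  also have "\<dots> = complex_of_real (1 / sqrt (1 + cmod \<alpha> ^ (2*2^n))) * \<alpha> ^ (2^n * (j div M))
      * (complex_of_real (Cn \<alpha> n) * \<alpha> ^ ((j mod M) div 2))"
  proof -
    have "j div M = 0 \<or> j div M = 1" using b by auto
    then show ?thesis using Suc.IH[OF jm] by (auto simp: Bmat_index)
  qed
  also have "\<dots> = complex_of_real (1 / sqrt (1 + cmod \<alpha> ^ (2*2^n)) * Cn \<alpha> n) * \<alpha> ^ (2^n * (j div M) + (j mod M) div 2)"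
    by (simp add: power_add)
  also have "1 / sqrt (1 + cmod \<alpha> ^ (2*2^n)) * Cn \<alpha> n = Cn \<alpha> (Suc n)"
    unfolding Cn_def by (simp add: real_sqrt_mult mult_ac)
  also have "2^n * (j div M) + (j mod M) div 2 = j div 2"
  proof -
    have "j = (j div M) * M + j mod M" by simp
    have "j div 2 = ((j div M) * M + j mod M) div 2" by simp
    also have "\<dots> = (j div M) * 2^n + (j mod M) div 2" by (simp add: M_def mult.assoc[symmetric] mult.commute[of _ 2])
    finally show ?thesis by simp
  qed
  finally show ?case .
qed




lemma adj_adj[simp]: "adj (adj A) = A"
  by (rule eq_matI, auto)

lemma unitary_adj: assumes "unitary_mat U" shows "unitary_mat (adj U)"
  using assms unfolding unitary_mat_def by auto

lemma Jidx_lt: "even m \<Longrightarrow> c < m \<Longrightarrow> Jidx m c < m"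
  by (auto simp: Jidx_def elim!: evenE)

lemma Jidx_inj: "even m \<Longrightarrow> i < m \<Longrightarrow> j < m \<Longrightarrow> Jidx m i = Jidx m j \<Longrightarrow> i = j"
proof -
  assume ev: "even m" and i: "i < m" and j: "j < m" and e: "Jidx m i = Jidx m j"
  have oe: "\<And>a b::nat. 2*a \<noteq> 2*b+1" by presburger
  show "i = j"
  proof (cases "i < m div 2"; cases "j < m div 2")
    assume "i < m div 2" "j < m div 2" then show ?thesis using e by (simp add: Jidx_def)
  next
    assume "i < m div 2" "\<not> j < m div 2" then show ?thesis using e oe by (simp add: Jidx_def)
  next
    assume "\<not> i < m div 2" "j < m div 2" then show ?thesis using e oe by (metis Jidx_def)
  next
    assume "\<not> i < m div 2" "\<not> j < m div 2" then show ?thesis using e i j by (simp add: Jidx_def)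
  qed
qed

lemma Jidx_div2: "Jidx m c div 2 = (if c < m div 2 then c else m - 1 - c)"
  by (auto simp: Jidx_def)

lemma Jmat_carrier[simp]: "Jmat m \<in> carrier_mat m m" "dim_row (Jmat m) = m" "dim_col (Jmat m) = m"
  by (auto simp: Jmat_def)

lemma Jmat_unitary: assumes "even m" shows "unitary_mat (Jmat m)"
proof (rule unitaryI[of _ m])
  show "Jmat m \<in> carrier_mat m m" by simp
  show "adj (Jmat m) * Jmat m = 1\<^sub>m m"
  proof (rule eq_matI)
    fix i j assume "i < dim_row (1\<^sub>m m :: complex mat)" "j < dim_col (1\<^sub>m m :: complex mat)"
    then have i: "i < m" and j: "j < m" by auto
    have "(adj (Jmat m) * Jmat m) $$ (i,j) = (\<Sum>r\<in>{0..<m}. cnj (Jmat m $$ (r,i)) * Jmat m $$ (r,j))"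
      using i j by (simp add: scalar_prod_def)
    also have "\<dots> = (\<Sum>r\<in>{0..<m}. (if r = Jidx m i then (if r = Jidx m j then 1 else 0) else 0))"
      using i j by (intro sum.cong) (auto simp: Jmat_def)
    also have "\<dots> = (if Jidx m i = Jidx m j then 1 else 0)"
      using Jidx_lt[OF assms i] by (simp add: sum.delta)
    also have "\<dots> = 1\<^sub>m m $$ (i,j)" using i j Jidx_inj[OF assms i j] by auto
    finally show "(adj (Jmat m) * Jmat m) $$ (i,j) = 1\<^sub>m m $$ (i,j)" .
  qed auto
qed

lemma prod_geom: "(\<Prod>t<n. 1 + (x::real) ^ (2^t)) = (\<Sum>s<2^n. x^s)"
proof (induction n)
  case 0 then show ?case by simp
next
  case (Suc n)
  have "(\<Sum>s<2^Suc n. x^s) = (\<Sum>s\<in>{0..<2*2^n}. x^s)" by (simp add: atLeast0LessThan)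
  also have "\<dots> = (\<Sum>p\<in>{0..<2}. \<Sum>q\<in>{0..<2^n}. x^(p*2^n+q))" by (rule sum_split_prod)
  also have "\<dots> = (\<Sum>q\<in>{0..<2^n}. x^q) + (\<Sum>q\<in>{0..<2^n}. x^(2^n+q))" by (simp add: numeral_2_eq_2)
  also have "\<dots> = (\<Sum>q<2^n. x^q) + (\<Sum>q<2^n. x^q) * x^(2^n)"
    by (simp add: power_add sum_distrib_right atLeast0LessThan mult.commute[of "x^(2^n)"])
  also have "\<dots> = (\<Sum>q<2^n. x^q) * (1 + x^(2^n))" by (simp add: algebra_simps)
  finally show ?case using Suc by simp
qed

theorem mainTheorem6:
  fixes k :: nat and \<alpha> :: complex
  assumes "k \<ge> 2"
  shows "unitary_mat (Amat \<alpha> k) \<and>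
    row (Amat \<alpha> k) 0 =
      row (mat_of_row (complex_of_real (sqrt (real (2^k))) \<cdot>\<^sub>v Psi \<alpha> (2^k)) * adj (fourier (2^k))) 0"
proof -
  define m where "m = (2::nat)^k"
  have ev: "even m" using assms by (simp add: m_def)
  have m0: "m > 0" by (simp add: m_def)
  have mh: "m div 2 = 2^(k-1)" using assms by (simp add: m_def power_diff)
  have Bk: "Bkron \<alpha> k = Lk \<alpha> (k-1)" by (simp add: Bkron_def Lk_def)
  have BkC: "Bkron \<alpha> k \<in> carrier_mat m m" using Lk_carrier[of \<alpha> "k-1"] assms by (simp add: Bk m_def)
  have BkU: "unitary_mat (Bkron \<alpha> k)" by (simp add: Bk Lk_unitary)
  define P where "P = adj (Jmat m) * Bkron \<alpha> k * Jmat m"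
  have PC: "P \<in> carrier_mat m m" unfolding P_def using BkC by auto
  have A: "Amat \<alpha> k = P * adj (fourier m)" by (simp add: Amat_def P_def m_def)
  have PU: "unitary_mat P" unfolding P_def
    by (rule unitary_mult[of _ _ m], rule unitary_mult[of _ _ m],
        insert unitary_adj[OF Jmat_unitary[OF ev]] Jmat_unitary[OF ev] BkU BkC, auto)
  have AU: "unitary_mat (Amat \<alpha> k)" unfolding A
    by (rule unitary_mult[of _ _ m], insert PU PC unitary_adj[OF fourier_unitary[OF m0]], auto)
  define v where "v = complex_of_real (sqrt (real m)) \<cdot>\<^sub>v Psi \<alpha> m"
  have vC: "v \<in> carrier_vec m" by (simp add: v_def Psi_def)
  have rowP: "row P 0 = v"
  proof (rule eq_vecI)
    show "dim_vec (row P 0) = dim_vec v" using PC vC by auto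
    fix c assume "c < dim_vec v"
    then have c: "c < m" using vC by auto
    have J0: "Jidx m 0 = 0" using m0 ev by (auto simp: Jidx_def)
    have "(adj (Jmat m) * Bkron \<alpha> k) $$ (0, Jidx m c) = (\<Sum>s\<in>{0..<m}. (if s = 0 then 1 else 0) * Bkron \<alpha> k $$ (s, Jidx m c))"
      using c m0 BkC Jidx_lt[OF ev c] J0 by (auto simp: scalar_prod_def Jmat_def intro!: sum.cong)
    also have "\<dots> = (\<Sum>s\<in>{0..<m}. if s = 0 then Bkron \<alpha> k $$ (s, Jidx m c) else 0)"
      by (intro sum.cong) auto
    also have "\<dots> = Bkron \<alpha> k $$ (0, Jidx m c)" using m0 by (simp add: sum.delta)
    finally have e1: "(adj (Jmat m) * Bkron \<alpha> k) $$ (0, Jidx m c) = Bkron \<alpha> k $$ (0, Jidx m c)" .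
    have "P $$ (0,c) = (\<Sum>r\<in>{0..<m}. (adj (Jmat m) * Bkron \<alpha> k) $$ (0, r) * (if r = Jidx m c then 1 else 0))"
      unfolding P_def using c m0 BkC by (auto simp: scalar_prod_def Jmat_def intro!: sum.cong)
    also have "\<dots> = (\<Sum>r\<in>{0..<m}. if r = Jidx m c then (adj (Jmat m) * Bkron \<alpha> k) $$ (0, r) else 0)"
      by (intro sum.cong) auto
    also have "\<dots> = (adj (Jmat m) * Bkron \<alpha> k) $$ (0, Jidx m c)"
      using Jidx_lt[OF ev c] by (simp add: sum.delta)
    also have "\<dots> = Bkron \<alpha> k $$ (0, Jidx m c)" by (rule e1)
    also have "\<dots> = complex_of_real (Cn \<alpha> (k-1)) * \<alpha> ^ (Jidx m c div 2)"
      unfolding Bk using Lk_row0[of "Jidx m c" "k-1" \<alpha>] Jidx_lt[OF ev c] assms by (simp add: m_def)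
    also have "\<dots> = v $ c"
    proof -
      define S where "S = (\<Sum>t<m div 2. cmod \<alpha> ^ (2*t))"
      have S: "(\<Prod>t<k-1. 1 + cmod \<alpha> ^ (2 * 2^t)) = S"
        unfolding S_def mh using prod_geom[where n="k-1" and x="cmod \<alpha> ^ 2"] by (simp add: power_mult)
      have "sqrt (real m) * (1 / sqrt (kappa \<alpha> m)) = Cn \<alpha> (k-1)"
        unfolding Cn_def S kappa_def S_def[symmetric] using m0 by (simp add: real_sqrt_mult)
      then have "complex_of_real (sqrt (real m)) * complex_of_real (1 / sqrt (kappa \<alpha> m)) = complex_of_real (Cn \<alpha> (k-1))"
        by (metis of_real_mult)
      moreover have "v $ c = complex_of_real (sqrt (real m)) * (complex_of_real (1 / sqrt (kappa \<alpha> m)) *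
         (if c < m div 2 then \<alpha> ^ c else \<alpha> ^ (m - 1 - c)))"
        using c by (simp add: v_def Psi_def)
      moreover have "\<alpha> ^ (Jidx m c div 2) = (if c < m div 2 then \<alpha> ^ c else \<alpha> ^ (m - 1 - c))"
        by (simp add: Jidx_div2)
      ultimately show ?thesis by (simp only: mult.assoc[symmetric])
    qed
    finally show "row P 0 $ c = v $ c" using c PC by simp
  qed
  have rowv: "row (mat_of_row v) 0 = v"
    by (rule eq_vecI, auto simp: mat_of_row_def)
  have "row (Amat \<alpha> k) 0 = row (mat_of_row v * adj (fourier m)) 0"
  proof -
    have FC: "adj (fourier m) \<in> carrier_mat m m" by (simp add: carrier_matI)
    have MC: "mat_of_row v \<in> carrier_mat 1 m" using vC by simp
    have c1: "row (P * adj (fourier m)) 0 = vec m (\<lambda>j. row P 0 \<bullet> col (adj (fourier m)) j)"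
      by (rule row_mult[OF PC FC m0])
    have c2: "row (mat_of_row v * adj (fourier m)) 0 = vec m (\<lambda>j. row (mat_of_row v) 0 \<bullet> col (adj (fourier m)) j)"
      by (rule row_mult[OF MC FC], simp)
    show ?thesis unfolding A c1 c2 rowP rowv ..
  qed
  then show ?thesis using AU by (simp add: v_def m_def)
qed


end
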